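(* Let $f:2^V\to\mathbb{R}$ be a submodular function such that $h^f_{\tau\sigma}=\tau h^f_\sigma$ for all permutations $\sigma,\tau$ of $V$. Let $\mathcal D\subseteq[0,1]^n$ be a Lebesgue measurable set that is symmetric under permutations, i.e. $x\sigma\in\mathcal D$ whenever $x\in\mathcal D$ and $\sigma$ is a permutation, where $(x\sigma)(i)=x(\sigma(i))$. For $\theta\ge 0$ and a permutation $\sigma$ define $$Z(\theta,\sigma)=\int_{\mathcal D}\exp\big(-\theta\, d_{\hat f}(x\|\sigma)\big)\,dx.$$ Then $Z(\theta,\sigma)$ does not depend on $\sigma$: $Z(\theta,\sigma)=Z(\theta,\sigma')$ for all permutations $\sigma,\sigma'$ of $V$.
   Context: Let $V=\{1,\dots,n\}$. A permutation $\sigma$ is a bijection $V\to V$, where $\sigma(i)$ is the element placed at rank $i$. Composition: $(\tau\sigma)(i)=\tau(\sigma(i))$. For a vector $x$ and permutation $\tau$, $(\tau x)(i)=x(\tau^{-1}(i))$. Write $S^\sigma_0=\emptyset$, $S^\sigma_j=\{\sigma(1),\dots,\sigma(j)\}$. For $f:2^V\to\mathbb{R}$ define $h^f_\sigma\in\mathbb{R}^n$ by $h^f_\sigma(\sigma(j))=f(S^\sigma_j)-f(S^\sigma_{j-1})$. For $x\in\mathbb{R}^n$, $\sigma_x$ orders $x$ if $x(\sigma_x(1))\ge\cdots\ge x(\sigma_x(n))$; the Lovász extension is $\hat f(x)=\langle x,h^f_{\sigma_x}\rangle$ (independent of the choice of $\sigma_x$). The LB divergence is $d_{\hat f}(x\|\sigma)=\hat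 f(x)-\langle x,h^f_\sigma\rangle$ for $x\in[0,1]^n$. *)

theory Defs
  imports "HOL-Analysis.Analysis" "HOL-Probability.Probability"
begin

text \<open>Ground set V = {1..n}; vectors in R^n are functions nat => real (indices 1..n).\<close>

definition submodular :: "nat \<Rightarrow> (nat set \<Rightarrow> real) \<Rightarrow> bool" where
  "submodular n f \<longleftrightarrow>
     (\<forall>A B. A \<subseteq> {1..n} \<longrightarrow> B \<subseteq> {1..n} \<longrightarrow> f (A \<union> B) + f (A \<inter> B) \<le> f A + f B)"

definition prefix_set :: "(nat \<Rightarrow> nat) \<Rightarrow> nat \<Rightarrow> nat set" where
  "prefix_set \<sigma> j = \<sigma> ` {1..j}"

text \<open>h^f_sigma(sigma(j)) = f(S_j) - f(S_{j-1}); zero outside V.\<close>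
definition hvec :: "nat \<Rightarrow> (nat set \<Rightarrow> real) \<Rightarrow> (nat \<Rightarrow> nat) \<Rightarrow> nat \<Rightarrow> real" where
  "hvec n f \<sigma> i = (if i \<in> {1..n} then
      f (prefix_set \<sigma> (inv \<sigma> i)) - f (prefix_set \<sigma> (inv \<sigma> i - 1)) else 0)"

definition inner_n :: "nat \<Rightarrow> (nat \<Rightarrow> real) \<Rightarrow> (nat \<Rightarrow> real) \<Rightarrow> real" where
  "inner_n n x y = (\<Sum>i\<in>{1..n}. x i * y i)"

definition orders :: "nat \<Rightarrow> (nat \<Rightarrow> real) \<Rightarrow> (nat \<Rightarrow> nat) \<Rightarrow> bool" where
  "orders n x \<sigma> \<longleftrightarrow> \<sigma> permutes {1..n} \<and>
     (\<forall>i j. 1 \<le> i \<longrightarrow> i \<le> j \<longrightarrow> j \<le> n \<longrightarrow> x (\<sigma> j) \<le> x (\<sigma> i))"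

definition lovasz :: "nat \<Rightarrow> (nat set \<Rightarrow> real) \<Rightarrow> (nat \<Rightarrow> real) \<Rightarrow> real" where
  "lovasz n f x = inner_n n x (hvec n f (SOME \<sigma>. orders n x \<sigma>))"

definition lb_div :: "nat \<Rightarrow> (nat set \<Rightarrow> real) \<Rightarrow> (nat \<Rightarrow> real) \<Rightarrow> (nat \<Rightarrow> nat) \<Rightarrow> real" where
  "lb_div n f x \<sigma> = lovasz n f x - inner_n n x (hvec n f \<sigma>)"

definition lebesgue_n :: "nat \<Rightarrow> (nat \<Rightarrow> real) measure" where
  "lebesgue_n n = completion (Pi\<^sub>M {1..n} (\<lambda>_. lborel))"

definition Zfun :: "nat \<Rightarrow> (nat set \<Rightarrow> real) \<Rightarrow> (nat \<Rightarrow> real) set \<Rightarrow> real \<Rightarrow> (nat \<Rightarrow> nat) \<Rightarrow> real" where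
  "Zfun n f D \<theta> \<sigma> = (LINT x:D|lebesgue_n n. exp (- \<theta> * lb_div n f x \<sigma>))"

end

theory Submission
  imports Defs "HOL-Library.Multiset"
begin


lemma T_meas:
  fixes n :: nat
  assumes t: "t permutes {1..n}"
  shows "(\<lambda>x i. x (t i)) \<in> Pi\<^sub>M {1..n} (\<lambda>_. lborel :: real measure) \<rightarrow>\<^sub>M Pi\<^sub>M {1..n} (\<lambda>_. lborel)"
proof (rule measurable_PiM_single')
  fix i assume "i \<in> {1..n}"
  then have "t i \<in> {1..n}" using permutes_in_image[OF t] by blast
  then show "(\<lambda>x. x (t i)) \<in> Pi\<^sub>M {1..n} (\<lambda>_. lborel) \<rightarrow>\<^sub>M lborel"
    by (rule measurable_component_singleton)
next
  show "(\<lambda>x i. x (t i)) \<in> space (Pi\<^sub>M {1..n} (\<lambda>_. lborel :: real measure)) \<rightarrow> (\<Pi>\<^sub>E i\<in>{1..n}. space (lborel :: real measure))"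
    using t by (auto simp: space_PiM PiE_def extensional_def permutes_def)
qed

lemma T_distr:
  fixes n :: nat
  assumes t: "t permutes {1..n}"
  shows "distr (Pi\<^sub>M {1..n} (\<lambda>_. lborel :: real measure)) (Pi\<^sub>M {1..n} (\<lambda>_. lborel)) (\<lambda>x i. x (t i)) = Pi\<^sub>M {1..n} (\<lambda>_. lborel)"
proof -
  have psf: "product_sigma_finite (\<lambda>_. lborel :: real measure)"
    by (simp add: product_sigma_finite_def lborel.sigma_finite_measure_axioms)
  show ?thesis
  proof (rule product_sigma_finite.PiM_eqI[OF psf])
    fix A assume A: "\<And>i. i \<in> {1..n} \<Longrightarrow> A i \<in> sets (lborel :: real measure)"
    have At: "\<And>i. i \<in> {1..n} \<Longrightarrow> A (inv t i) \<in> sets (lborel :: real measure)"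
      using A t by (meson permutes_in_image permutes_inv)
    have pre: "(\<lambda>x i. x (t i)) -` Pi\<^sub>E {1..n} A \<inter> space (Pi\<^sub>M {1..n} (\<lambda>_. lborel :: real measure))
        = Pi\<^sub>E {1..n} (\<lambda>i. A (inv t i))"
    proof -
      have t1: "\<And>i. i \<in> {1..n} \<Longrightarrow> t i \<in> {1..n}" using permutes_in_image[OF t] by blast
      have t2: "\<And>i. i \<in> {1..n} \<Longrightarrow> inv t i \<in> {1..n}" using permutes_in_image[OF permutes_inv[OF t]] by blast
      have t3: "\<And>i. t (inv t i) = i" "\<And>i. inv t (t i) = i" using permutes_inverses[OF t] by auto
      have t4: "\<And>i. i \<notin> {1..n} \<Longrightarrow> t i = i" using t unfolding permutes_def by blast
      show ?thesis
      proof (rule set_eqI, rule iffI)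
        fix x assume "x \<in> (\<lambda>x i. x (t i)) -` Pi\<^sub>E {1..n} A \<inter> space (Pi\<^sub>M {1..n} (\<lambda>_. lborel :: real measure))"
        then have h1: "\<And>i. i \<in> {1..n} \<Longrightarrow> x (t i) \<in> A i" and h2: "x \<in> extensional {1..n}"
          by (auto simp: space_PiM PiE_iff)
        have "x i \<in> A (inv t i)" if "i \<in> {1..n}" for i
          using h1[OF t2[OF that]] by (simp add: t3)
        then show "x \<in> Pi\<^sub>E {1..n} (\<lambda>i. A (inv t i))" using h2 by (simp add: PiE_iff)
      next
        fix x assume "x \<in> Pi\<^sub>E {1..n} (\<lambda>i. A (inv t i))"
        then have h1: "\<And>i. i \<in> {1..n} \<Longrightarrow> x i \<in> A (inv t i)" and h2: "x \<in> extensional {1..n}"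
          by (auto simp: PiE_iff)
        have "x (t i) \<in> A i" if "i \<in> {1..n}" for i
          using h1[OF t1[OF that]] by (simp add: t3)
        moreover have "(\<lambda>i. x (t i)) \<in> extensional {1..n}"
          using h2 t4 by (simp add: extensional_def)
        ultimately show "x \<in> (\<lambda>x i. x (t i)) -` Pi\<^sub>E {1..n} A \<inter> space (Pi\<^sub>M {1..n} (\<lambda>_. lborel :: real measure))"
          using h2 by (simp add: space_PiM PiE_iff)
      qed
    qed
    have "emeasure (distr (Pi\<^sub>M {1..n} (\<lambda>_. lborel)) (Pi\<^sub>M {1..n} (\<lambda>_. lborel)) (\<lambda>x i. x (t i))) (Pi\<^sub>E {1..n} A)
       = emeasure (Pi\<^sub>M {1..n} (\<lambda>_. lborel)) (Pi\<^sub>E {1..n} (\<lambda>i. A (inv t i)))"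
    proof -
      have S: "Pi\<^sub>E {1..n} A \<in> sets (Pi\<^sub>M {1..n} (\<lambda>_. lborel :: real measure))"
        using A by (intro sets_PiM_I_finite) auto
      show ?thesis by (simp only: emeasure_distr[OF T_meas[OF t] S] pre)
    qed
    also have "\<dots> = (\<Prod>i\<in>{1..n}. emeasure lborel (A (inv t i)))"
      using At by (intro product_sigma_finite.emeasure_PiM[OF psf]) auto
    also have "\<dots> = (\<Prod>i\<in>{1..n}. emeasure lborel (A i))"
      using prod.permute[OF permutes_inv[OF t], of "\<lambda>i. emeasure lborel (A i)"]
      by (simp add: comp_def)
    finally show "emeasure (distr (Pi\<^sub>M {1..n} (\<lambda>_. lborel)) (Pi\<^sub>M {1..n} (\<lambda>_. lborel)) (\<lambda>x i. x (t i))) (Pi\<^sub>E {1..n} A) = (\<Prod>i\<in>{1..n}. emeasure lborel (A i))" .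
  qed simp_all
qed

lemma L_distr:
  fixes n :: nat
  assumes t: "t permutes {1..n}"
  shows "distr (lebesgue_n n) (lebesgue_n n) (\<lambda>x i. x (t i)) = lebesgue_n n"
proof -
  let ?P = "Pi\<^sub>M {1..n} (\<lambda>_. lborel :: real measure)"
  let ?T = "\<lambda>x i. x (t i)"
  have m: "?T \<in> completion ?P \<rightarrow>\<^sub>M ?P" by (rule measurable_completion[OF T_meas[OF t]])
  have "completion (distr (completion ?P) ?P ?T) = distr (completion ?P) (completion ?P) ?T"
    by (rule completion.completion_distr_eq[OF m]) (simp only: distr_completion[OF T_meas[OF t]] T_distr[OF t])
  then show ?thesis
    unfolding lebesgue_n_def
    by (simp only: distr_completion[OF T_meas[OF t]] T_distr[OF t])
qed

lemma L_meas:
  fixes n :: nat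
  assumes t: "t permutes {1..n}"
  shows "(\<lambda>x i. x (t i)) \<in> lebesgue_n n \<rightarrow>\<^sub>M lebesgue_n n"
  unfolding lebesgue_n_def
  by (rule completion.measurable_completion2[OF measurable_completion[OF T_meas[OF t]]])
     (simp only: distr_completion[OF T_meas[OF t]] T_distr[OF t] order_refl)

lemma int_inv:
  fixes n :: nat
  assumes t: "t permutes {1..n}"
  shows "integral\<^sup>L (lebesgue_n n) (\<lambda>x. g (\<lambda>i. x (t i))) = integral\<^sup>L (lebesgue_n n) (g :: _ \<Rightarrow> real)"
proof -
  let ?T = "\<lambda>x i. x (t i)"
  have mT: "?T \<in> lebesgue_n n \<rightarrow>\<^sub>M lebesgue_n n"
    by (rule L_meas[OF t])
  show ?thesis
  proof (cases "g \<in> borel_measurable (lebesgue_n n)")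
    case True
    have "integral\<^sup>L (lebesgue_n n) g = integral\<^sup>L (distr (lebesgue_n n) (lebesgue_n n) ?T) g"
      using L_distr[OF t] by simp
    also have "\<dots> = integral\<^sup>L (lebesgue_n n) (\<lambda>x. g (?T x))"
      by (rule integral_distr[OF mT True])
    finally show ?thesis by simp
  next
    case False
    have mI: "(\<lambda>x i. x (inv t i)) \<in> lebesgue_n n \<rightarrow>\<^sub>M lebesgue_n n"
      by (rule L_meas[OF permutes_inv[OF t]])
    have "(\<lambda>x. g (?T x)) \<notin> borel_measurable (lebesgue_n n)"
    proof
      assume "(\<lambda>x. g (?T x)) \<in> borel_measurable (lebesgue_n n)"
      from measurable_comp[OF mI this] have "(\<lambda>x. g (\<lambda>i. x (inv t (t i)))) \<in> borel_measurable (lebesgue_n n)"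
        by (simp add: comp_def)
      moreover have "(\<lambda>i. x (inv t (t i))) = x" for x :: "nat \<Rightarrow> real"
        using t by (simp add: permutes_inverses)
      ultimately show False using False by simp
    qed
    then show ?thesis using False
      by (metis borel_measurable_integrable not_integrable_integral_eq)
  qed
qed


lemma mset_ord:
  fixes n :: nat and x :: "nat \<Rightarrow> real"
  assumes r: "r permutes {1..n}"
  shows "mset (map (\<lambda>j. - x (r j)) [1..<n+1]) = image_mset (\<lambda>i. - x i) (mset_set {1..n})"
proof -
  have "mset (map (\<lambda>j. - x (r j)) [1..<n+1]) = image_mset ((\<lambda>i. - x i) \<circ> r) (mset_set {1..<n+1})"
    by (simp add: mset_upt comp_def del: upt_Suc)
  also have "\<dots> = image_mset (\<lambda>i. - x i) (image_mset r (mset_set {1..n}))"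
    by (simp add: atLeastLessThanSuc_atLeastAtMost multiset.map_comp)
  also have "image_mset r (mset_set {1..n}) = mset_set (r ` {1..n})"
    by (rule image_mset_mset_set) (meson permutes_inj_on r)
  also have "r ` {1..n} = {1..n}" by (rule permutes_image[OF r])
  finally show ?thesis .
qed

lemma sorted_ord:
  assumes o: "orders n x r"
  shows "sorted (map (\<lambda>j. - x (r j)) [1..<n+1])"
  unfolding sorted_iff_nth_mono
proof (intro allI impI)
  fix i j assume ij: "i \<le> j" "j < length (map (\<lambda>j. - x (r j)) [1..<n+1])"
  then have "x (r (1+j)) \<le> x (r (1+i))" using o unfolding orders_def by (auto simp del: upt_Suc)
  then show "map (\<lambda>j. - x (r j)) [1..<n+1] ! i \<le> map (\<lambda>j. - x (r j)) [1..<n+1] ! j"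
    using ij by (simp add: nth_upt del: upt_Suc)
qed

lemma ord_unique:
  assumes o1: "orders n x r1" and o2: "orders n x r2" and j: "j \<in> {1..n}"
  shows "x (r1 j) = x (r2 j)"
proof -
  have p1: "r1 permutes {1..n}" and p2: "r2 permutes {1..n}" using o1 o2 by (auto simp: orders_def)
  have "sort (map (\<lambda>j. - x (r2 j)) [1..<n+1]) = map (\<lambda>j. - x (r1 j)) [1..<n+1]"
    by (rule properties_for_sort) (simp_all only: mset_ord[OF p1] mset_ord[OF p2] sorted_ord[OF o1])
  moreover have "sort (map (\<lambda>j. - x (r2 j)) [1..<n+1]) = map (\<lambda>j. - x (r2 j)) [1..<n+1]"
    by (rule sorted_sort_id[OF sorted_ord[OF o2]])
  ultimately have "map (\<lambda>j. - x (r1 j)) [1..<n+1] = map (\<lambda>j. - x (r2 j)) [1..<n+1]"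
    by metis
  then have "map (\<lambda>j. - x (r1 j)) [1..<n+1] ! (j - 1) = map (\<lambda>j. - x (r2 j)) [1..<n+1] ! (j - 1)"
    by (rule arg_cong)
  moreover obtain k where k: "j = Suc k" "k < n" using j by (cases j) auto
  ultimately show ?thesis by (simp del: upt_Suc)
qed

lemma ord_exists:
  fixes n :: nat and x :: "nat \<Rightarrow> real"
  shows "\<exists>r. orders n x r"
proof -
  define ys where "ys = sort_key (\<lambda>i. - x i) [1..<n+1]"
  have len: "length ys = n" by (simp add: ys_def)
  have dis: "distinct ys" by (simp add: ys_def)
  have set: "set ys = {1..n}" by (auto simp: ys_def)
  have srt: "sorted (map (\<lambda>i. - x i) ys)" by (simp add: ys_def)
  define r where "r j = (if j \<in> {1..n} then ys ! (j - 1) else j)" for j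
  have inj: "inj_on r {1..n}"
  proof (rule inj_onI)
    fix a b assume ab: "a \<in> {1..n}" "b \<in> {1..n}" "r a = r b"
    then have "ys ! (a - 1) = ys ! (b - 1)" by (simp add: r_def)
    then have "a - 1 = b - 1" using nth_eq_iff_index_eq[OF dis] ab len by auto
    then show "a = b" using ab by auto
  qed
  have img: "r ` {1..n} \<subseteq> {1..n}"
  proof
    fix y assume "y \<in> r ` {1..n}"
    then obtain a where a: "a \<in> {1..n}" "y = ys ! (a - 1)" by (auto simp: r_def)
    then have "a - 1 < length ys" using len by auto
    then show "y \<in> {1..n}" using a set nth_mem by metis
  qed
  have bij: "bij_betw r {1..n} {1..n}"
    using inj img by (simp add: bij_betw_def endo_inj_surj)
  have perm: "r permutes {1..n}"
    by (rule bij_imp_permutes[OF bij]) (auto simp: r_def)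
  have "x (r j) \<le> x (r i)" if "1 \<le> i" "i \<le> j" "j \<le> n" for i j
  proof -
    have "map (\<lambda>i. - x i) ys ! (i - 1) \<le> map (\<lambda>i. - x i) ys ! (j - 1)"
      using srt that len unfolding sorted_iff_nth_mono by auto
    then show ?thesis using that len by (simp add: r_def)
  qed
  then show ?thesis using perm unfolding orders_def by blast
qed


lemma sum_perm_inv:
  fixes n :: nat
  assumes r: "r permutes {1..n}"
  shows "(\<Sum>i\<in>{1..n}. x i * h (inv r i)) = (\<Sum>j\<in>{1..n}. x (r j) * (h j :: real))"
  using sum.permute[OF r, of "\<lambda>i. x i * h (inv r i)"] permutes_inverses(2)[OF r]
  by (simp add: comp_def)

lemma lov_eq:
  assumes H: "\<And>\<sigma> \<tau>. \<sigma> permutes {1..n} \<Longrightarrow> \<tau> permutes {1..n} \<Longrightarrow>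
           hvec n f (\<tau> \<circ> \<sigma>) = (\<lambda>i. hvec n f \<sigma> (inv \<tau> i))"
    and o: "orders n x r"
  shows "lovasz n f x = (\<Sum>j\<in>{1..n}. x (r j) * hvec n f id j)"
proof -
  define r0 where "r0 = (SOME r. orders n x r)"
  have o0: "orders n x r0" unfolding r0_def by (rule someI[of _ r]) (rule o)
  have p0: "r0 permutes {1..n}" using o0 by (simp add: orders_def)
  have h: "hvec n f r0 = (\<lambda>i. hvec n f id (inv r0 i))"
    using H[OF permutes_id p0] by simp
  have "lovasz n f x = (\<Sum>j\<in>{1..n}. x (r0 j) * hvec n f id j)"
    unfolding lovasz_def r0_def[symmetric] inner_n_def h by (rule sum_perm_inv[OF p0])
  also have "\<dots> = (\<Sum>j\<in>{1..n}. x (r j) * hvec n f id j)"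
    by (rule sum.cong) (simp_all add: ord_unique[OF o0 o])
  finally show ?thesis .
qed

lemma lov_inv:
  fixes n :: nat
  assumes H: "\<And>\<sigma> \<tau>. \<sigma> permutes {1..n} \<Longrightarrow> \<tau> permutes {1..n} \<Longrightarrow>
           hvec n f (\<tau> \<circ> \<sigma>) = (\<lambda>i. hvec n f \<sigma> (inv \<tau> i))"
    and t: "t permutes {1..n}"
  shows "lovasz n f (\<lambda>i. x (t i)) = lovasz n f x"
proof -
  obtain r where o: "orders n x r" using ord_exists by blast
  have oy: "orders n (\<lambda>i. x (t i)) (inv t \<circ> r)"
    using o permutes_compose[OF _ permutes_inv[OF t], of r] permutes_inverses(1)[OF t]
    unfolding orders_def by auto
  show ?thesis
    using lov_eq[OF H oy] lov_eq[OF H o] permutes_inverses(1)[OF t] by simp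
qed

lemma inner_T:
  fixes n :: nat
  assumes t: "t permutes {1..n}"
  shows "inner_n n (\<lambda>i. x (t i)) h = inner_n n x (\<lambda>i. h (inv t i))"
  unfolding inner_n_def using sum_perm_inv[OF t, of x h] by simp


theorem mainTheorem12:
  fixes n :: nat and f :: "nat set \<Rightarrow> real" and D :: "(nat \<Rightarrow> real) set" and \<theta> :: real
  assumes "submodular n f"
    and "\<And>\<sigma> \<tau>. \<sigma> permutes {1..n} \<Longrightarrow> \<tau> permutes {1..n} \<Longrightarrow>
           hvec n f (\<tau> \<circ> \<sigma>) = (\<lambda>i. hvec n f \<sigma> (inv \<tau> i))"
    and "D \<subseteq> PiE {1..n} (\<lambda>_. {0..1})"
    and "D \<in> sets (lebesgue_n n)"
    and "\<And>x \<sigma>. x \<in> D \<Longrightarrow> \<sigma> permutes {1..n} \<Longrightarrow> (\<lambda>i. x (\<sigma> i)) \<in> D"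
    and "\<theta> \<ge> 0"
    and "\<sigma> permutes {1..n}" and "\<sigma>' permutes {1..n}"
  shows "Zfun n f D \<theta> \<sigma> = Zfun n f D \<theta> \<sigma>'"
proof -
  note H = assms(2)
  have s: "\<sigma> permutes {1..n}" and s': "\<sigma>' permutes {1..n}" using assms(7,8) .
  define t where "t = \<sigma>' \<circ> inv \<sigma>"
  have tp: "t permutes {1..n}" unfolding t_def by (rule permutes_compose[OF permutes_inv[OF s] s'])
  have ts: "t \<circ> \<sigma> = \<sigma>'" unfolding t_def by (rule ext) (simp add: permutes_inverses(2)[OF s])
  have hs: "hvec n f \<sigma>' = (\<lambda>i. hvec n f \<sigma> (inv t i))" using H[OF s tp] ts by simp
  have ind: "indicator D (\<lambda>i. x (t i)) = (indicator D x :: real)" for x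
  proof -
    have "(\<lambda>i. x (t i)) \<in> D \<longleftrightarrow> x \<in> D"
    proof
      assume "(\<lambda>i. x (t i)) \<in> D"
      from assms(5)[OF this permutes_inv[OF tp]] show "x \<in> D"
        using permutes_inverses(1)[OF tp] by simp
    next
      assume "x \<in> D" then show "(\<lambda>i. x (t i)) \<in> D" by (rule assms(5)[OF _ tp])
    qed
    then show ?thesis by (simp add: indicator_def)
  qed
  have lb: "lb_div n f (\<lambda>i. x (t i)) \<sigma> = lb_div n f x \<sigma>'" for x
    using lov_inv[OF H tp, of x] by (simp add: lb_div_def inner_T[OF tp] hs)
  have "Zfun n f D \<theta> \<sigma> = integral\<^sup>L (lebesgue_n n) (\<lambda>x. indicator D x *\<^sub>R exp (- \<theta> * lb_div n f x \<sigma>))"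
    by (simp add: Zfun_def set_lebesgue_integral_def)
  also have "\<dots> = integral\<^sup>L (lebesgue_n n) (\<lambda>x. indicator D (\<lambda>i. x (t i)) *\<^sub>R exp (- \<theta> * lb_div n f (\<lambda>i. x (t i)) \<sigma>))"
    by (rule int_inv[OF tp, symmetric])
  also have "\<dots> = integral\<^sup>L (lebesgue_n n) (\<lambda>x. indicator D x *\<^sub>R exp (- \<theta> * lb_div n f x \<sigma>'))"
    by (simp only: ind lb)
  also have "\<dots> = Zfun n f D \<theta> \<sigma>'"
    by (simp add: Zfun_def set_lebesgue_integral_def)
  finally show ?thesis .
qed

end
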